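(* Let $\tilde\sigma=(g_1,\dots,g_T)\in\Sigma$, let $\tau\in[T-1]$, and let $\bar\sigma$ be the input obtained from $\tilde\sigma$ by interchanging $g_\tau$ and $g_{\tau+1}$. Then $$\eta_{OPT}(\tilde\sigma^{[1:\tau]})-\eta_{OPT}(\tilde\sigma^{[1:\tau-1]})\ \ge\ \eta_{OPT}(\bar\sigma^{[1:\tau+1]})-\eta_{OPT}(\bar\sigma^{[1:\tau]}).$$
   Context: Fix $\Delta>0$ and $0<m\le M$. Let $\mathcal G$ be the family of all functions $g:[0,\Delta]\to\mathbb{R}$ that are concave, increasing and differentiable on $[0,\Delta]$ with $g(0)=0$ and $g'(0)\in[m,M]$. An input is a finite sequence $\sigma=(g_1,\dots,g_T)$, $T\ge1$, $g_t\in\mathcal G$; $\Sigma$ is the set of all inputs. For $0\le t\le T$, $\sigma^{[1:t]}=(g_1,\dots,g_t)$ ($\sigma^{[1:0]}$ is empty). $\eta_{OPT}(\sigma^{[1:t]})$ denotes the optimal value of $\max\sum_{s=1}^t g_s(v_s)$ subject to $\sum_{s=1}^t v_s\le\Delta$, $v_s\ge0$; $\eta_{OPT}$ of the empty sequence is $0$. *)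

theory Defs
  imports "HOL-Analysis.Analysis"
begin

definition in_G :: "real \<Rightarrow> real \<Rightarrow> real \<Rightarrow> (real \<Rightarrow> real) \<Rightarrow> bool" where
  "in_G \<Delta> m M g \<longleftrightarrow>
     concave_on {0..\<Delta>} g \<and>
     mono_on {0..\<Delta>} g \<and>
     (\<forall>x\<in>{0..\<Delta>}. g differentiable (at x within {0..\<Delta>})) \<and>
     g 0 = 0 \<and>
     (\<exists>d. (g has_real_derivative d) (at 0 within {0..\<Delta>}) \<and> m \<le> d \<and> d \<le> M)"

text \<open>An input: a nonempty finite sequence of functions in G (list, position s is g_(s+1)).\<close>
definition is_input :: "real \<Rightarrow> real \<Rightarrow> real \<Rightarrow> (real \<Rightarrow> real) list \<Rightarrow> bool" where
  "is_input \<Delta> m M \<sigma> \<longleftrightarrow> \<sigma> \<noteq> [] \<and> (\<forall>g\<in>set \<sigma>. in_G \<Delta> m M g)"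

text \<open>Optimal value of max sum_s g_s(v_s) s.t. sum_s v_s <= Delta, v_s >= 0
(the supremum, which is attained; equals 0 for the empty sequence).\<close>
definition eta_OPT :: "real \<Rightarrow> (real \<Rightarrow> real) list \<Rightarrow> real" where
  "eta_OPT \<Delta> gs =
     Sup {(\<Sum>s<length gs. (gs ! s) (v s)) | v :: nat \<Rightarrow> real.
            (\<forall>s<length gs. v s \<ge> 0) \<and> (\<Sum>s<length gs. v s) \<le> \<Delta>}"

abbreviation prefix_seq :: "'a list \<Rightarrow> nat \<Rightarrow> 'a list" where
  "prefix_seq \<sigma> t \<equiv> take t \<sigma>"

text \<open>Interchange of g_tau and g_(tau+1) (1-indexed), i.e. list positions tau-1 and tau.\<close>
definition swap_adj :: "'a list \<Rightarrow> nat \<Rightarrow> 'a list" where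
  "swap_adj \<sigma> \<tau> = \<sigma>[\<tau> - 1 := \<sigma> ! \<tau>, \<tau> := \<sigma> ! (\<tau> - 1)]"

end

theory Submission
  imports Defs
begin

lemma conc_pair:
  fixes g :: "real \<Rightarrow> real"
  assumes "concave_on {0..D} g" "u \<in> {0..D}" "w \<in> {0..D}" "0 \<le> l" "l \<le> 1"
  shows "g ((1-l)*u + l*w) + g (l*u + (1-l)*w) \<ge> g u + g w"
proof -
  have 1: "g ((1-l)*u + l*w) \<ge> (1-l)*g u + l*g w"
    using concave_onD[OF assms(1) assms(4,5,2,3)] by simp
  have 2: "g ((1-(1-l))*u + (1-l)*w) \<ge> (1-(1-l))*g u + (1-l)*g w"
    using concave_onD[OF assms(1), of "1-l" u w] assms by simp
  from 1 2 show ?thesis by (simp add: algebra_simps)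
qed

definition feas :: "real \<Rightarrow> nat \<Rightarrow> (nat \<Rightarrow> real) \<Rightarrow> bool" where
  "feas D n v \<longleftrightarrow> (\<forall>s<n. v s \<ge> 0) \<and> (\<Sum>s<n. v s) \<le> D"

definition val :: "(real \<Rightarrow> real) list \<Rightarrow> (nat \<Rightarrow> real) \<Rightarrow> real" where
  "val gs v = (\<Sum>s<length gs. (gs ! s) (v s))"

lemma eta_eq: "eta_OPT D gs = Sup {val gs v | v. feas D (length gs) v}"
  unfolding eta_OPT_def val_def feas_def by simp

lemma feas_le: "feas D n v \<Longrightarrow> s < n \<Longrightarrow> v s \<in> {0..D}"
proof -
  assume f: "feas D n v" and s: "s < n"
  have "v s \<le> (\<Sum>s<n. v s)"
    by (rule member_le_sum) (use f s in \<open>auto simp: feas_def\<close>)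
  with f s show ?thesis by (auto simp: feas_def)
qed

lemma bdd:
  assumes "\<forall>g\<in>set gs. mono_on {0..D} g"
  shows "bdd_above {val gs v | v. feas D (length gs) v}"
proof (rule bdd_aboveI)
  fix x assume "x \<in> {val gs v | v. feas D (length gs) v}"
  then obtain v where x: "x = val gs v" and f: "feas D (length gs) v" by auto
  have "val gs v \<le> (\<Sum>s<length gs. (gs ! s) D)"
    unfolding val_def
  proof (rule sum_mono)
    fix s assume "s \<in> {..<length gs}"
    then have s: "s < length gs" by simp
    have "v s \<in> {0..D}" using feas_le[OF f s] .
    moreover have "mono_on {0..D} (gs ! s)" using assms s by auto
    ultimately show "(gs ! s) (v s) \<le> (gs ! s) D"
      by (auto intro: mono_onD)
  qed
  then show "x \<le> (\<Sum>s<length gs. (gs ! s) D)" using x by simp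
qed

lemma nonempty: "D \<ge> 0 \<Longrightarrow> {val gs v | v. feas D (length gs) v} \<noteq> {}"
  by (auto simp: feas_def intro!: exI[of _ "\<lambda>_. 0"])

lemma upper:
  assumes "\<forall>g\<in>set gs. mono_on {0..D} g" "feas D (length gs) v"
  shows "val gs v \<le> eta_OPT D gs"
  unfolding eta_eq using assms by (auto intro!: cSup_upper bdd)

lemma sup_sum_le:
  fixes S1 S2 :: "real set"
  assumes "S1 \<noteq> {}" "S2 \<noteq> {}" "\<And>x y. x \<in> S1 \<Longrightarrow> y \<in> S2 \<Longrightarrow> x + y \<le> c"
  shows "Sup S1 + Sup S2 \<le> c"
proof -
  have "Sup S2 \<le> c - Sup S1"
  proof (rule cSup_least[OF assms(2)])
    fix y assume y: "y \<in> S2"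
    have "Sup S1 \<le> c - y"
      by (rule cSup_least[OF assms(1)]) (use assms(3) y in force)
    then show "y \<le> c - Sup S1" by simp
  qed
  then show ?thesis by simp
qed

lemma key:
  fixes D :: real and A :: "(real \<Rightarrow> real) list"
  assumes D: "D \<ge> 0"
    and G: "\<forall>g\<in>set (A @ [a, b]). concave_on {0..D} g \<and> mono_on {0..D} g"
  shows "eta_OPT D (A @ [b, a]) + eta_OPT D A \<le> eta_OPT D (A @ [a]) + eta_OPT D (A @ [b])"
proof -
  let ?n = "length A"
  have mA: "\<forall>g\<in>set A. mono_on {0..D} g" using G by auto
  have mBA: "\<forall>g\<in>set (A@[b,a]). mono_on {0..D} g" using G by auto
  have mAa: "\<forall>g\<in>set (A@[a]). mono_on {0..D} g" using G by auto
  have mAb: "\<forall>g\<in>set (A@[b]). mono_on {0..D} g" using G by auto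
  show ?thesis
    unfolding eta_eq[of D "A@[b,a]"] eta_eq[of D A]
  proof (rule sup_sum_le[OF nonempty[OF D] nonempty[OF D]])
    fix x y
    assume "x \<in> {val (A @ [b, a]) v |v. feas D (length (A @ [b, a])) v}"
      and "y \<in> {val A v |v. feas D (length A) v}"
    then obtain v w where x: "x = val (A @ [b, a]) v" and fv: "feas D (?n+2) v"
      and yy: "y = val A w" and fw: "feas D ?n w" by auto
    define Y where "Y = (\<Sum>s<?n. v s)"
    define Sw where "Sw = (\<Sum>s<?n. w s)"
    define vb where "vb = v ?n"
    define va where "va = v (Suc ?n)"
    have sumv: "(\<Sum>s<?n+2. v s) = Y + vb + va"
      by (simp add: Y_def vb_def va_def)
    have c1: "Y + vb + va \<le> D" using fv sumv by (simp add: feas_def)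
    have vbn: "vb \<ge> 0" "va \<ge> 0" using fv by (auto simp: feas_def vb_def va_def)
    have Yn: "Y \<ge> 0" unfolding Y_def using fv by (auto simp: feas_def intro!: sum_nonneg)
    have c2: "Sw \<le> D" using fw by (simp add: feas_def Sw_def)
    define l where "l = (if Sw \<le> Y then 0 else min 1 (vb / (Sw - Y)))"
    have l01: "0 \<le> l" "l \<le> 1" using vbn by (auto simp: l_def)
    have b1: "(1-l)*Y + l*Sw + va \<le> D \<and> l*Y + (1-l)*Sw + vb \<le> D"
    proof (cases "Sw \<le> Y")
      case True then show ?thesis using c1 c2 vbn by (simp add: l_def)
    next
      case False
      show ?thesis
      proof (cases "vb / (Sw - Y) \<le> 1")
        case True
        have e: "l * (Sw - Y) = vb" using False True by (simp add: l_def)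
        have "(1-l)*Y + l*Sw = Y + l*(Sw-Y)" "l*Y + (1-l)*Sw = Sw - l*(Sw-Y)"
          by (simp_all add: algebra_simps)
        then show ?thesis using e c1 c2 by simp
      next
        case F2: False
        have "vb \<ge> Sw - Y" using F2 False by (simp add: field_simps)
        then show ?thesis using False F2 c1 vbn by (simp add: l_def)
      qed
    qed
    define p where "p = (\<lambda>s. if s < ?n then (1-l) * v s + l * w s else va)"
    define q where "q = (\<lambda>s. if s < ?n then l * v s + (1-l) * w s else vb)"
    have sp: "(\<Sum>s<?n. p s) = (1-l)*Y + l*Sw"
      by (simp add: p_def Y_def Sw_def sum.distrib sum_distrib_left)
    have sq: "(\<Sum>s<?n. q s) = l*Y + (1-l)*Sw"
      by (simp add: q_def Y_def Sw_def sum.distrib sum_distrib_left)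
    have vin: "\<And>s. s < ?n \<Longrightarrow> v s \<in> {0..D}" using feas_le[OF fv] by simp
    have win: "\<And>s. s < ?n \<Longrightarrow> w s \<in> {0..D}" using feas_le[OF fw] by simp
    have fp: "feas D (length (A@[a])) p"
      unfolding feas_def
    proof
      show "\<forall>s<length (A @ [a]). 0 \<le> p s"
        using vin win l01 vbn by (auto simp: p_def)
      show "(\<Sum>s<length (A @ [a]). p s) \<le> D"
        using sp b1 by (simp add: p_def)
    qed
    have fq: "feas D (length (A@[b])) q"
      unfolding feas_def
    proof
      show "\<forall>s<length (A @ [b]). 0 \<le> q s"
        using vin win l01 vbn by (auto simp: q_def)
      show "(\<Sum>s<length (A @ [b]). q s) \<le> D"
        using sq b1 by (simp add: q_def)
    qed
    have valx: "x = (\<Sum>s<?n. (A!s) (v s)) + b vb + a va"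
      by (simp add: x val_def nth_append vb_def va_def)
    have valy: "y = (\<Sum>s<?n. (A!s) (w s))" by (simp add: yy val_def)
    have valp: "val (A@[a]) p = (\<Sum>s<?n. (A!s) ((1-l) * v s + l * w s)) + a va"
      by (simp add: val_def nth_append p_def)
    have valq: "val (A@[b]) q = (\<Sum>s<?n. (A!s) (l * v s + (1-l) * w s)) + b vb"
      by (simp add: val_def nth_append q_def)
    have "(\<Sum>s<?n. (A!s) (v s)) + (\<Sum>s<?n. (A!s) (w s)) \<le>
          (\<Sum>s<?n. (A!s) ((1-l) * v s + l * w s)) + (\<Sum>s<?n. (A!s) (l * v s + (1-l) * w s))"
      unfolding sum.distrib[symmetric]
    proof (rule sum_mono)
      fix s assume "s \<in> {..<?n}"
      then have s: "s < ?n" by simp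
      have "concave_on {0..D} (A!s)" using G s by (auto simp: nth_mem)
      from conc_pair[OF this vin[OF s] win[OF s] l01] 
      show "(A!s) (v s) + (A!s) (w s) \<le> (A!s) ((1-l) * v s + l * w s) + (A!s) (l * v s + (1-l) * w s)"
        by simp
    qed
    then have "x + y \<le> val (A@[a]) p + val (A@[b]) q"
      using valx valy valp valq by simp
    also have "\<dots> \<le> eta_OPT D (A @ [a]) + eta_OPT D (A @ [b])"
      using upper[OF mAa fp] upper[OF mAb fq] by simp
    finally show "x + y \<le> eta_OPT D (A @ [a]) + eta_OPT D (A @ [b])" .
  qed
qed

theorem lemma3:
  fixes \<Delta> m M :: real and \<sigma> :: "(real \<Rightarrow> real) list" and \<tau> :: nat
  assumes "\<Delta> > 0" and "0 < m" and "m \<le> M"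
    and "is_input \<Delta> m M \<sigma>"
    and "1 \<le> \<tau>" and "\<tau> \<le> length \<sigma> - 1"
  shows "eta_OPT \<Delta> (prefix_seq \<sigma> \<tau>) - eta_OPT \<Delta> (prefix_seq \<sigma> (\<tau> - 1))
         \<ge> eta_OPT \<Delta> (prefix_seq (swap_adj \<sigma> \<tau>) (\<tau> + 1))
           - eta_OPT \<Delta> (prefix_seq (swap_adj \<sigma> \<tau>) \<tau>)"
proof -
  define n where "n = \<tau> - 1"
  have tn: "\<tau> = Suc n" using assms(5) by (simp add: n_def)
  have len: "Suc n < length \<sigma>" using assms(5,6) tn by simp
  define A where "A = take n \<sigma>"
  define a where "a = \<sigma> ! n"
  define b where "b = \<sigma> ! Suc n"
  have lA: "length A = n" using len by (simp add: A_def)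
  have t1: "take \<tau> \<sigma> = A @ [a]" using len by (simp add: tn A_def a_def take_Suc_conv_app_nth)
  have t0: "take (\<tau> - 1) \<sigma> = A" by (simp add: tn A_def)
  have sw: "swap_adj \<sigma> \<tau> = \<sigma>[n := b, Suc n := a]"
    by (simp add: swap_adj_def tn a_def b_def)
  have t2: "take (\<tau>+1) (swap_adj \<sigma> \<tau>) = A @ [b, a]"
  proof -
    have "take (Suc (Suc n)) (\<sigma>[n := b, Suc n := a]) = A @ [b, a]"
      using len unfolding A_def by (simp add: take_Suc_conv_app_nth nth_list_update)
    then show ?thesis unfolding sw by (simp add: tn)
  qed
  have t3: "take \<tau> (swap_adj \<sigma> \<tau>) = A @ [b]"
  proof -
    have "take (Suc n) (\<sigma>[n := b, Suc n := a]) = A @ [b]"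
      using len unfolding A_def by (simp add: take_Suc_conv_app_nth nth_list_update)
    then show ?thesis unfolding sw by (simp add: tn)
  qed
  have sub: "set (A @ [a, b]) \<subseteq> set \<sigma>"
    using len by (auto simp: A_def a_def b_def dest: in_set_takeD)
  have G: "\<forall>g\<in>set (A @ [a, b]). concave_on {0..\<Delta>} g \<and> mono_on {0..\<Delta>} g"
    using assms(4) sub by (auto simp: is_input_def in_G_def)
  have "eta_OPT \<Delta> (A @ [b, a]) + eta_OPT \<Delta> A \<le> eta_OPT \<Delta> (A @ [a]) + eta_OPT \<Delta> (A @ [b])"
    by (rule key) (use assms(1) G in auto)
  then show ?thesis unfolding t1 t0 t2 t3 by simp
qed

end
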